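(* Let $R_1,R_2$ be Reeb graphs, $\varepsilon\ge0$, and let $v_1\in V(R_1)$, $v_2\in V(R_2)$ be nodes that are either both maxima-or-split nodes or both minima-or-join nodes. Let $\phi:R_1\to R_2^\varepsilon$ be a morphism with $\phi(v_1)\in P^\varepsilon(v_2)$. Then for every $\delta\ge0$, $$\phi^\delta(s_\delta(v_1))\in P^\varepsilon(s_\delta(v_2)),$$ where $P^\varepsilon(s_\delta(v_2))\subset (R_2^\delta)^\varepsilon=R_2^{\varepsilon+\delta}$.
   Context: A Reeb graph $R=(G,f)$ is a finite multigraph $G$ (identified with its geometric realization) with continuous $f$ strictly monotone on each edge and injective on nodes. Split node: up-degree $>1$, down-degree $1$; join node: up-degree $1$, down-degree $>1$; maximum: up-degree $0$, down-degree $1$; minimum: up-degree $1$, down-degree $0$ (up/down-degree = number of incident edges along which $f$ increases/decreases away from the node; degenerate nodes are superpositions of such nodes). A morphism is a continuous map $h$ with $f_2\circ h=f_1$. For $\delta\ge0$, $\mathcal T^\delta(R)=G\times[-\delta,\delta]$ with $F^\delta(x,t)=f(x)+t$; $R^\delta$ is its Reeb graph with quotient map $\pi$; $(R^\varepsilon)^\delta$ is identified with $R^{\varepsilon+\delta}$. For a morphism $\phi:R_1\to R_2^\varepsilon$, $\phi^\delta:R_1^\delta\to R_2^{\varepsilon+\delta}$ is induced by $(x,t)\mapsto(\phi(x),t)$ from $\mathcal T^\delta(R_1)$ to $\mathcal T^\delta(R_2^\varepsilon)$. For a point $x$ of a Reeb graph $R$, $P^\varepsilon(x)=\pi(\{x\}\times[-\varepsilon,\varepsilon])\subset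 R^\varepsilon$. For a node $v$ that is a maximum or split node, $s_\delta(v)=\pi(v,\delta)\in R^\delta$; for a minimum or join node, $s_\delta(v)=\pi(v,-\delta)\in R^\delta$. *)

theory Defs
  imports "HOL-Analysis.Analysis"
begin

record ('v,'e) reeb =
  nodes :: "'v set"
  edges :: "'e set"
  lo :: "'e \<Rightarrow> 'v"
  hi :: "'e \<Rightarrow> 'v"
  ht :: "'v \<Rightarrow> real"

definition reeb_graph :: "('v,'e) reeb \<Rightarrow> bool" where
  "reeb_graph R \<longleftrightarrow> finite (nodes R) \<and> finite (edges R) \<and> inj_on (ht R) (nodes R) \<and>
     (\<forall>e\<in>edges R. lo R e \<in> nodes R \<and> hi R e \<in> nodes R \<and> ht R (lo R e) < ht R (hi R e))"

text \<open>Points of the geometric realization: a node, or an interior point of an edge,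
  given by its f-value (f is strictly monotone on each edge).\<close>
datatype ('v,'e) rpt = Nd 'v | Ed 'e real

definition rcarrier :: "('v,'e) reeb \<Rightarrow> ('v,'e) rpt set" where
  "rcarrier R = Nd ` nodes R \<union>
     {Ed e h | e h. e \<in> edges R \<and> ht R (lo R e) < h \<and> h < ht R (hi R e)}"

fun fval :: "('v,'e) reeb \<Rightarrow> ('v,'e) rpt \<Rightarrow> real" where
  "fval R (Nd v) = ht R v"
| "fval R (Ed e h) = h"

text \<open>Characteristic map of the closed edge e from the interval of heights.\<close>
definition emb :: "('v,'e) reeb \<Rightarrow> 'e \<Rightarrow> real \<Rightarrow> ('v,'e) rpt" where
  "emb R e h = (if h = ht R (lo R e) then Nd (lo R e)
                else if h = ht R (hi R e) then Nd (hi R e) else Ed e h)"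

text \<open>Topology of the geometric realization (quotient of the disjoint union of
  the closed edges and the nodes).\<close>
definition reeb_space :: "('v,'e) reeb \<Rightarrow> ('v,'e) rpt topology" where
  "reeb_space R = topology (\<lambda>U. U \<subseteq> rcarrier R \<and>
     (\<forall>e\<in>edges R. openin (top_of_set {ht R (lo R e)..ht R (hi R e)})
        {h \<in> {ht R (lo R e)..ht R (hi R e)}. emb R e h \<in> U}))"

definition updeg :: "('v,'e) reeb \<Rightarrow> 'v \<Rightarrow> nat" where
  "updeg R v = card {e \<in> edges R. lo R e = v}"

definition downdeg :: "('v,'e) reeb \<Rightarrow> 'v \<Rightarrow> nat" where
  "downdeg R v = card {e \<in> edges R. hi R e = v}"

definition max_or_split :: "('v,'e) reeb \<Rightarrow> 'v \<Rightarrow> bool" where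
  "max_or_split R v \<longleftrightarrow> v \<in> nodes R \<and> downdeg R v = 1 \<and> (updeg R v = 0 \<or> updeg R v > 1)"

definition min_or_join :: "('v,'e) reeb \<Rightarrow> 'v \<Rightarrow> bool" where
  "min_or_join R v \<longleftrightarrow> v \<in> nodes R \<and> updeg R v = 1 \<and> (downdeg R v = 0 \<or> downdeg R v > 1)"

definition reeb_rel :: "'a topology \<Rightarrow> ('a \<Rightarrow> real) \<Rightarrow> 'a \<Rightarrow> 'a \<Rightarrow> bool" where
  "reeb_rel X F p q \<longleftrightarrow> p \<in> topspace X \<and> q \<in> topspace X \<and> F p = F q \<and>
     connected_component_of (subtopology X {z \<in> topspace X. F z = F p}) p q"

definition reeb_class :: "'a topology \<Rightarrow> ('a \<Rightarrow> real) \<Rightarrow> 'a \<Rightarrow> 'a set" where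
  "reeb_class X F p = Collect (reeb_rel X F p)"

definition reeb_top :: "'a topology \<Rightarrow> ('a \<Rightarrow> real) \<Rightarrow> 'a set topology" where
  "reeb_top X F = topology (\<lambda>U. U \<subseteq> reeb_class X F ` topspace X \<and> openin X (\<Union>U))"

definition reeb_fun :: "('a \<Rightarrow> real) \<Rightarrow> 'a set \<Rightarrow> real" where
  "reeb_fun F S = F (SOME p. p \<in> S)"

definition thicken :: "'a topology \<Rightarrow> real \<Rightarrow> ('a \<times> real) topology" where
  "thicken X \<delta> = prod_topology X (top_of_set {-\<delta>..\<delta>})"

definition thicken_fun :: "('a \<Rightarrow> real) \<Rightarrow> 'a \<times> real \<Rightarrow> real" where
  "thicken_fun F = (\<lambda>(x,t). F x + t)"

text \<open>R^\<delta> as a space, its function, and the quotient map \<pi>(x,t)\<close>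
definition smooth :: "'a topology \<Rightarrow> ('a \<Rightarrow> real) \<Rightarrow> real \<Rightarrow> ('a \<times> real) set topology" where
  "smooth X F \<delta> = reeb_top (thicken X \<delta>) (thicken_fun F)"

definition smooth_fun :: "('a \<Rightarrow> real) \<Rightarrow> ('a \<times> real) set \<Rightarrow> real" where
  "smooth_fun F = reeb_fun (thicken_fun F)"

definition proj :: "'a topology \<Rightarrow> ('a \<Rightarrow> real) \<Rightarrow> real \<Rightarrow> 'a \<Rightarrow> real \<Rightarrow> ('a \<times> real) set" where
  "proj X F \<delta> x t = reeb_class (thicken X \<delta>) (thicken_fun F) (x, t)"

definition Pset :: "'a topology \<Rightarrow> ('a \<Rightarrow> real) \<Rightarrow> real \<Rightarrow> 'a \<Rightarrow> ('a \<times> real) set set" where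
  "Pset X F \<epsilon> x = {proj X F \<epsilon> x t | t. t \<in> {-\<epsilon>..\<epsilon>}}"

text \<open>The identification (R^\<epsilon>)^\<delta> = R^(\<epsilon>+\<delta>): \<pi>(\<pi>(x,s),t) \<mapsto> \<pi>(x,s+t).\<close>
definition ident :: "'a topology \<Rightarrow> ('a \<Rightarrow> real) \<Rightarrow> real \<Rightarrow> real \<Rightarrow>
    (('a \<times> real) set \<times> real) set \<Rightarrow> ('a \<times> real) set" where
  "ident X F \<epsilon> \<delta> Q = (let z = (SOME z. z \<in> Q); p = (SOME p. p \<in> fst z)
                       in proj X F (\<epsilon> + \<delta>) (fst p) (snd p + snd z))"

definition morphism :: "'a topology \<Rightarrow> ('a \<Rightarrow> real) \<Rightarrow> 'b topology \<Rightarrow> ('b \<Rightarrow> real) \<Rightarrow> ('a \<Rightarrow> 'b) \<Rightarrow> bool" where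
  "morphism X F Y G h \<longleftrightarrow> continuous_map X Y h \<and> (\<forall>x\<in>topspace X. G (h x) = F x)"

text \<open>For \<phi> : R1 \<rightarrow> R2^\<epsilon>, the map \<phi>^\<delta> : R1^\<delta> \<rightarrow> R2^(\<epsilon>+\<delta>), induced by (x,t) \<mapsto> (\<phi> x, t)
  into (R2^\<epsilon>)^\<delta>, followed by the identification with R2^(\<epsilon>+\<delta>).\<close>
definition smooth_morph :: "'a topology \<Rightarrow> ('a \<Rightarrow> real) \<Rightarrow> 'b topology \<Rightarrow> ('b \<Rightarrow> real) \<Rightarrow> real \<Rightarrow> real \<Rightarrow>
    ('a \<Rightarrow> ('b \<times> real) set) \<Rightarrow> ('a \<times> real) set \<Rightarrow> ('b \<times> real) set" where
  "smooth_morph X1 F1 X2 F2 \<epsilon> \<delta> \<phi> Q =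
     ident X2 F2 \<epsilon> \<delta>
       (let z = (SOME z. z \<in> Q) in proj (smooth X2 F2 \<epsilon>) (smooth_fun F2) \<delta> (\<phi> (fst z)) (snd z))"

definition sdelta :: "('v,'e) reeb \<Rightarrow> real \<Rightarrow> 'v \<Rightarrow> (('v,'e) rpt \<times> real) set" where
  "sdelta R \<delta> v = (if max_or_split R v then proj (reeb_space R) (fval R) \<delta> (Nd v) \<delta>
                    else proj (reeb_space R) (fval R) \<delta> (Nd v) (-\<delta>))"

end

theory Submission
  imports Defs
begin

lemma rel_topspace: "reeb_rel X F p q \<Longrightarrow> p \<in> topspace X \<and> q \<in> topspace X \<and> F p = F q"
  by (simp add: reeb_rel_def)

lemma rel_refl: "p \<in> topspace X \<Longrightarrow> reeb_rel X F p p"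
  by (simp add: reeb_rel_def connected_component_of_refl)

lemma rel_sym: "reeb_rel X F p q \<Longrightarrow> reeb_rel X F q p"
  unfolding reeb_rel_def by (auto simp: connected_component_of_sym)

lemma rel_trans: "reeb_rel X F p q \<Longrightarrow> reeb_rel X F q r \<Longrightarrow> reeb_rel X F p r"
  unfolding reeb_rel_def by (auto intro: connected_component_of_trans)

lemma class_eq: "reeb_rel X F p q \<Longrightarrow> reeb_class X F p = reeb_class X F q"
proof -
  assume a: "reeb_rel X F p q"
  show ?thesis unfolding reeb_class_def
  proof (rule set_eqI)
    fix r show "r \<in> Collect (reeb_rel X F p) \<longleftrightarrow> r \<in> Collect (reeb_rel X F q)"
      using rel_trans[OF a, of r] rel_trans[OF rel_sym[OF a], of r] by auto
  qed
qed

lemma in_class: "q \<in> reeb_class X F p \<longleftrightarrow> reeb_rel X F p q"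
  by (simp add: reeb_class_def)

lemma self_in_class: "p \<in> topspace X \<Longrightarrow> p \<in> reeb_class X F p"
  by (simp add: in_class rel_refl)

lemma class_sub: "reeb_class X F p \<subseteq> topspace X"
  by (auto simp: in_class reeb_rel_def)

lemma classes_disj: "A \<in> reeb_class X F ` topspace X \<Longrightarrow> B \<in> reeb_class X F ` topspace X \<Longrightarrow> x \<in> A \<Longrightarrow> x \<in> B \<Longrightarrow> A = B"
proof -
  assume a: "A \<in> reeb_class X F ` topspace X" "B \<in> reeb_class X F ` topspace X" "x \<in> A" "x \<in> B"
  then obtain a b where ab: "A = reeb_class X F a" "B = reeb_class X F b" by blast
  have "A = reeb_class X F x" using a(3) unfolding ab(1) in_class by (rule class_eq)
  moreover have "B = reeb_class X F x" using a(4) unfolding ab(2) in_class by (rule class_eq)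
  ultimately show ?thesis by simp
qed

lemma Union_classes: "\<Union> (reeb_class X F ` topspace X) = topspace X"
proof
  show "\<Union> (reeb_class X F ` topspace X) \<subseteq> topspace X" by (rule UN_least, rule class_sub)
  show "topspace X \<subseteq> \<Union> (reeb_class X F ` topspace X)"
  proof
    fix x assume x: "x \<in> topspace X"
    show "x \<in> \<Union> (reeb_class X F ` topspace X)" using self_in_class[OF x] x by (rule UN_I[rotated])
  qed
qed

lemma istop_reeb_top: "istopology (\<lambda>U. U \<subseteq> reeb_class X F ` topspace X \<and> openin X (\<Union>U))"
proof -
  have un: "\<Union>(S \<inter> T) = \<Union>S \<inter> \<Union>T" if "S \<subseteq> reeb_class X F ` topspace X" "T \<subseteq> reeb_class X F ` topspace X" for S T
  proof (intro subset_antisym subsetI)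
    fix x assume "x \<in> \<Union>S \<inter> \<Union>T"
    then obtain A B where AB: "A \<in> S" "x \<in> A" "B \<in> T" "x \<in> B" by blast
    have "A \<in> reeb_class X F ` topspace X" using AB(1) that(1) by (rule subsetD[rotated])
    moreover have "B \<in> reeb_class X F ` topspace X" using AB(3) that(2) by (rule subsetD[rotated])
    ultimately have "A = B" using classes_disj AB(2,4) by metis
    then show "x \<in> \<Union>(S \<inter> T)" using AB by auto
  next
    fix x assume "x \<in> \<Union>(S \<inter> T)"
    then show "x \<in> \<Union>S \<inter> \<Union>T" by auto
  qed
  have un2: "openin X (\<Union>(\<Union>K))" if "\<forall>S\<in>K. openin X (\<Union>S)" for K
  proof -
    have "\<Union>(\<Union>K) = \<Union>(Union ` K)" by auto
    moreover have "openin X (\<Union>(Union ` K))" by (rule openin_Union) (use that in auto)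
    ultimately show ?thesis by simp
  qed
  have f1: "S \<inter> T \<subseteq> reeb_class X F ` topspace X \<and> openin X (\<Union>(S \<inter> T))"
    if a: "S \<subseteq> reeb_class X F ` topspace X \<and> openin X (\<Union>S)"
      "T \<subseteq> reeb_class X F ` topspace X \<and> openin X (\<Union>T)" for S T
  proof -
    have "openin X (\<Union>S \<inter> \<Union>T)" using a by (intro openin_Int) auto
    then show ?thesis using un[of S T] a by auto
  qed
  have f2: "\<Union>K \<subseteq> reeb_class X F ` topspace X \<and> openin X (\<Union>(\<Union>K))"
    if a: "\<forall>S\<in>K. S \<subseteq> reeb_class X F ` topspace X \<and> openin X (\<Union>S)" for K
  proof -
    have "openin X (\<Union>(\<Union>K))" using a by (intro un2) auto
    then show ?thesis using a by auto
  qed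
  show ?thesis unfolding istopology_def using f1 f2 by blast
qed

lemma openin_reeb_top: "openin (reeb_top X F) U \<longleftrightarrow> U \<subseteq> reeb_class X F ` topspace X \<and> openin X (\<Union>U)"
  by (simp only: reeb_top_def topology_inverse'[OF istop_reeb_top])

lemma topspace_reeb_top: "topspace (reeb_top X F) = reeb_class X F ` topspace X"
proof -
  have "openin (reeb_top X F) (reeb_class X F ` topspace X)"
    by (simp add: openin_reeb_top Union_classes)
  moreover have "S \<subseteq> reeb_class X F ` topspace X" if "openin (reeb_top X F) S" for S
    using that by (simp add: openin_reeb_top)
  ultimately show ?thesis unfolding topspace_def
    by (intro subset_antisym Union_least Union_upper) auto
qed

lemma closedin_reeb_top:
  assumes "W \<subseteq> reeb_class X F ` topspace X" "closedin X (\<Union>W)"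
  shows "closedin (reeb_top X F) W"
proof -
  have "\<Union>(reeb_class X F ` topspace X - W) = topspace X - \<Union>W"
  proof (intro subset_antisym subsetI)
    fix x assume "x \<in> \<Union>(reeb_class X F ` topspace X - W)"
    then obtain A where A: "A \<in> reeb_class X F ` topspace X" "A \<notin> W" "x \<in> A" by blast
    then have "x \<in> topspace X" using class_sub[of X F] by blast
    moreover have "x \<notin> \<Union>W"
    proof
      assume "x \<in> \<Union>W"
      then obtain B where "B \<in> W" "x \<in> B" by blast
      then have "A = B" using classes_disj[OF A(1) _ A(3)] assms(1) by blast
      then show False using A(2) \<open>B \<in> W\<close> by simp
    qed
    ultimately show "x \<in> topspace X - \<Union>W" by simp
  next
    fix x assume x: "x \<in> topspace X - \<Union>W"
    then have "reeb_class X F x \<notin> W" "x \<in> reeb_class X F x" using self_in_class[of x X F] by auto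
    then show "x \<in> \<Union>(reeb_class X F ` topspace X - W)" using x by blast
  qed
  moreover have "openin X (topspace X - \<Union>W)" using assms(2) by (simp add: closedin_def)
  ultimately show ?thesis using assms(1) unfolding closedin_def topspace_reeb_top openin_reeb_top
    by auto
qed

lemma reeb_fun_class: "p \<in> topspace X \<Longrightarrow> reeb_fun F (reeb_class X F p) = F p"
proof -
  assume p: "p \<in> topspace X"
  have "(SOME q. q \<in> reeb_class X F p) \<in> reeb_class X F p"
    using self_in_class[OF p] by (rule someI)
  then have "reeb_rel X F p (SOME q. q \<in> reeb_class X F p)" by (simp add: in_class)
  then show ?thesis unfolding reeb_fun_def using rel_topspace by metis
qed

lemma reeb_fun_mem: "A \<in> reeb_class X F ` topspace X \<Longrightarrow> q \<in> A \<Longrightarrow> reeb_fun F A = F q"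
proof -
  assume a: "A \<in> reeb_class X F ` topspace X" "q \<in> A"
  then obtain p where p: "p \<in> topspace X" "A = reeb_class X F p" by blast
  then have "reeb_rel X F p q" using a(2) by (simp add: in_class)
  then show ?thesis using p reeb_fun_class[OF p(1)] rel_topspace by metis
qed

lemma rel_map:
  assumes "continuous_map X Y h" "\<And>x. x \<in> topspace X \<Longrightarrow> G (h x) = F x + k"
    and "reeb_rel X F p q"
  shows "reeb_rel Y G (h p) (h q)"
proof -
  let ?L = "{z \<in> topspace X. F z = F p}" and ?M = "{z \<in> topspace Y. G z = G (h p)}"
  have pq: "p \<in> topspace X" "q \<in> topspace X" "F p = F q" and cc: "connected_component_of (subtopology X ?L) p q"
    using assms(3) by (auto simp: reeb_rel_def)
  have c0: "continuous_map (subtopology X ?L) Y h" by (rule continuous_map_from_subtopology[OF assms(1)])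
  have "h ` topspace (subtopology X ?L) \<subseteq> ?M"
    using assms(1,2) pq by (auto simp: continuous_map_def)
  then have "continuous_map (subtopology X ?L) (subtopology Y ?M) h"
    using c0 by (simp add: continuous_map_in_subtopology image_subset_iff_funcset)
  from connected_component_of_continuous_image[OF this cc]
  show ?thesis using pq assms unfolding reeb_rel_def by (auto simp: continuous_map_def)
qed

lemma topspace_thicken: "topspace (thicken X d) = topspace X \<times> {-d..d}"
  by (simp add: thicken_def)

lemma tf_simp[simp]: "thicken_fun F (x,t) = F x + t"
  by (simp add: thicken_fun_def)

lemma snd_cont: "continuous_map (prod_topology X (top_of_set S)) euclideanreal snd"
  using continuous_map_snd[of X "top_of_set S"] continuous_map_in_subtopology by blast

lemma cont_tf: "continuous_map X euclideanreal F \<Longrightarrow> continuous_map (thicken X d) euclideanreal (thicken_fun F)"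
proof -
  assume F: "continuous_map X euclideanreal F"
  have "continuous_map (thicken X d) euclideanreal (\<lambda>z. F (fst z) + snd z)"
    unfolding thicken_def
    by (intro continuous_map_add continuous_map_compose[OF continuous_map_fst F, unfolded o_def] snd_cont)
  moreover have "(\<lambda>z. F (fst z) + snd z) = thicken_fun F" by (auto simp: thicken_fun_def)
  ultimately show ?thesis by simp
qed

lemma rel_shift:
  assumes "\<bar>k\<bar> \<le> \<delta>" "reeb_rel (thicken X \<epsilon>) (thicken_fun F) p q"
  shows "reeb_rel (thicken X (\<epsilon>+\<delta>)) (thicken_fun F) (fst p, snd p + k) (fst q, snd q + k)"
proof -
  have c: "continuous_map (thicken X \<epsilon>) (thicken X (\<epsilon>+\<delta>)) (\<lambda>z. (fst z, snd z + k))"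
    unfolding thicken_def
  proof (intro continuous_map_pairedI continuous_map_fst)
    show "continuous_map (prod_topology X (top_of_set {- \<epsilon>..\<epsilon>})) (top_of_set {- (\<epsilon> + \<delta>)..\<epsilon> + \<delta>}) (\<lambda>x. snd x + k)"
      unfolding continuous_map_in_subtopology
      using assms(1) by (auto intro!: continuous_map_add snd_cont)
  qed
  show ?thesis
    by (rule rel_map[OF c _ assms(2), of _ k]) (auto simp: thicken_fun_def topspace_thicken)
qed

lemma smooth_top: "topspace (smooth X F e) = reeb_class (thicken X e) (thicken_fun F) ` topspace (thicken X e)"
  by (simp add: smooth_def topspace_reeb_top)

lemma class_pt:
  assumes "A \<in> topspace (smooth X F e)" "(x,s) \<in> A"
  shows "x \<in> topspace X" "\<bar>s\<bar> \<le> e" "smooth_fun F A = F x + s"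
proof -
  have A: "A \<in> reeb_class (thicken X e) (thicken_fun F) ` topspace (thicken X e)"
    using assms(1) by (simp add: smooth_top)
  then have "(x,s) \<in> topspace (thicken X e)" using assms(2) class_sub[of "thicken X e" "thicken_fun F"] by blast
  then show "x \<in> topspace X" "\<bar>s\<bar> \<le> e" by (auto simp: topspace_thicken)
  show "smooth_fun F A = F x + s" unfolding smooth_fun_def
    using reeb_fun_mem[OF A assms(2)] by simp
qed

lemma class_rel:
  assumes "A \<in> topspace (smooth X F e)" "p \<in> A" "q \<in> A"
  shows "reeb_rel (thicken X e) (thicken_fun F) p q"
proof -
  obtain p0 where p0: "A = reeb_class (thicken X e) (thicken_fun F) p0"
    using assms(1) by (auto simp: smooth_top)
  then have "reeb_rel (thicken X e) (thicken_fun F) p0 p" "reeb_rel (thicken X e) (thicken_fun F) p0 q"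
    using assms(2,3) by (simp_all add: in_class)
  then show ?thesis using rel_sym rel_trans by metis
qed

lemma class_nonempty:
  assumes "A \<in> topspace (smooth X F e)"
  shows "\<exists>p. p \<in> A"
proof -
  obtain p0 where "p0 \<in> topspace (thicken X e)" "A = reeb_class (thicken X e) (thicken_fun F) p0"
    using assms(1) by (auto simp: smooth_top)
  then show ?thesis using self_in_class by metis
qed

lemma lift:
  fixes X :: "'a topology" and F :: "'a \<Rightarrow> real"
  assumes contF: "continuous_map X euclideanreal F"
    and fin: "\<And>c. finite ((\<lambda>z. connected_component_of_set (subtopology (thicken X (\<epsilon>+\<delta>)) {w \<in> topspace (thicken X (\<epsilon>+\<delta>)). thicken_fun F w = c}) z) ` {w \<in> topspace (thicken X (\<epsilon>+\<delta>)). thicken_fun F w = c})"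
    and rel: "reeb_rel (thicken (smooth X F \<epsilon>) \<delta>) (thicken_fun (smooth_fun F)) (A,a) (B,b)"
    and xA: "(x,s) \<in> A" and yB: "(y,r) \<in> B"
  shows "reeb_rel (thicken X (\<epsilon>+\<delta>)) (thicken_fun F) (x, s+a) (y, r+b)"
proof -
  define Y where "Y = thicken X \<epsilon>"
  define Q where "Q = smooth X F \<epsilon>"
  define g where "g = smooth_fun F"
  define T where "T = thicken Q \<delta>"
  define Z where "Z = thicken X (\<epsilon>+\<delta>)"
  define c where "c = g A + a"
  define Zc where "Zc = {w \<in> topspace Z. thicken_fun F w = c}"
  define ZT where "ZT = subtopology Z Zc"
  define comp where "comp = (\<lambda>z. connected_component_of_set ZT z)"
  define Cs where "Cs = comp ` Zc"
  define Lev where "Lev = {z \<in> topspace T. thicken_fun g z = c}"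
  define W where "W = (\<lambda>D. {z \<in> Lev. \<forall>p\<in>fst z. (fst p, snd p + snd z) \<in> D})"
  have relT: "reeb_rel T (thicken_fun g) (A,a) (B,b)" using rel by (simp add: T_def Q_def g_def)
  have Aa: "A \<in> topspace Q" "\<bar>a\<bar> \<le> \<delta>" and Bb: "B \<in> topspace Q" "\<bar>b\<bar> \<le> \<delta>" and lev: "g A + a = g B + b"
    using rel_topspace[OF relT] by (auto simp: T_def topspace_thicken)
  have finCs: "finite Cs" using fin[of c] by (simp add: Cs_def comp_def ZT_def Zc_def Z_def)
  have liftcc: "connected_component_of ZT (fst p, snd p + k) (fst q, snd q + k)"
    if "reeb_rel Y (thicken_fun F) p q" "\<bar>k\<bar> \<le> \<delta>" "thicken_fun F p + k = c" for p q k
  proof -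
    have r: "reeb_rel Z (thicken_fun F) (fst p, snd p + k) (fst q, snd q + k)"
      using rel_shift[OF that(2) that(1)[unfolded Y_def]] by (simp add: Z_def)
    have e: "thicken_fun F (fst p, snd p + k) = c" using that(3) by (cases p) simp
    from r have "connected_component_of (subtopology Z {z \<in> topspace Z. thicken_fun F z = thicken_fun F (fst p, snd p + k)}) (fst p, snd p + k) (fst q, snd q + k)"
      unfolding reeb_rel_def by (elim conjE)
    then show ?thesis unfolding e ZT_def Zc_def .
  qed
  have compmem: "w' \<in> D" if h: "D \<in> Cs" "w \<in> D" "connected_component_of ZT w w'" for D w w'
  proof -
    obtain u where "D = comp u" using h(1) Cs_def by blast
    then have "connected_component_of ZT u w" using h(2) by (simp add: comp_def)
    then have "connected_component_of ZT u w'" using h(3) by (rule connected_component_of_trans)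
    then show ?thesis using \<open>D = comp u\<close> by (simp add: comp_def)
  qed
  have Levp: "B' \<in> topspace Q" "\<bar>b'\<bar> \<le> \<delta>" "g B' + b' = c" if "(B',b') \<in> Lev" for B' b'
    using that by (auto simp: Lev_def T_def topspace_thicken)
  have liftZc: "(x', s' + b') \<in> Zc" "g B' = F x' + s'" if "(B',b') \<in> Lev" "(x',s') \<in> B'" for B' b' x' s'
  proof -
    note L = Levp[OF that(1)]
    have "x' \<in> topspace X" "\<bar>s'\<bar> \<le> \<epsilon>" "g B' = F x' + s'"
      using class_pt[OF L(1)[unfolded Q_def] that(2)] by (simp_all add: g_def)
    then show "(x', s' + b') \<in> Zc" "g B' = F x' + s'" using L(2,3)
      by (auto simp: Zc_def Z_def topspace_thicken)
  qed
  have cover: "\<exists>D\<in>Cs. z \<in> W D" if zL: "z \<in> Lev" for z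
  proof -
    obtain B' b' where z: "z = (B',b')" by (cases z)
    have zL': "(B',b') \<in> Lev" using zL z by simp
    note L = Levp[OF zL']
    obtain p where p: "p \<in> B'" using class_nonempty[OF L(1)[unfolded Q_def]] by blast
    obtain x' s' where p': "p = (x',s')" by (cases p)
    define w where "w = (x', s' + b')"
    have wZ: "w \<in> Zc" using liftZc(1)[OF zL' p[unfolded p']] w_def by simp
    have D: "comp w \<in> Cs" using wZ Cs_def by blast
    have gp: "g B' = F x' + s'" using liftZc(2)[OF zL' p[unfolded p']] .
    have "\<forall>q\<in>B'. (fst q, snd q + b') \<in> comp w"
    proof
      fix q assume q: "q \<in> B'"
      have r: "reeb_rel Y (thicken_fun F) p q" using class_rel[OF L(1)[unfolded Q_def] p q] Y_def by simp
      have "thicken_fun F p + b' = c" using gp L(3) p' by simp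
      then have "connected_component_of ZT (fst p, snd p + b') (fst q, snd q + b')" by (rule liftcc[OF r L(2)])
      then show "(fst q, snd q + b') \<in> comp w" using w_def p' comp_def by simp
    qed
    then have "z \<in> W (comp w)" using zL z W_def by simp
    then show ?thesis using D by blast
  qed
  have disj: "D = D'" if h: "D \<in> Cs" "D' \<in> Cs" "z \<in> W D" "z \<in> W D'" for D D' z
  proof -
    obtain B' b' where z: "z = (B',b')" by (cases z)
    have zl: "(B',b') \<in> Lev" using h(3) z W_def by simp
    obtain p where p: "p \<in> B'" using class_nonempty[OF Levp(1)[OF zl, unfolded Q_def]] by blast
    define w where "w = (fst p, snd p + b')"
    have wD: "w \<in> D" "w \<in> D'" using h(3,4) p z w_def W_def by auto
    obtain u u' where uu: "D = comp u" "D' = comp u'" using h(1,2) Cs_def by blast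
    then have "connected_component_of ZT u w" "connected_component_of ZT u' w" using wD comp_def by simp_all
    then have "connected_component_of ZT u = connected_component_of ZT w" "connected_component_of ZT u' = connected_component_of ZT w"
      by (meson connected_component_of_equiv)+
    then show ?thesis using uu by (simp add: comp_def)
  qed
  have closedW: "closedin (subtopology T Lev) (W D)" if hD: "D \<in> Cs" for D
  proof -
    define W' where "W' = {B' \<in> topspace Q. g B' \<in> {c-\<delta>..c+\<delta>} \<and> (\<forall>p\<in>B'. (fst p, c - F (fst p)) \<in> D)}"
    define m where "m = (\<lambda>p::'a\<times>real. (fst p, c - F (fst p)))"
    define S1 where "S1 = {p \<in> topspace Y. thicken_fun F p \<in> {c-\<delta>..c+\<delta>}}"
    define SD where "SD = {p \<in> topspace Y. thicken_fun F p \<in> {c-\<delta>..c+\<delta>} \<and> m p \<in> D}"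
    obtain u where u: "D = comp u" using hD Cs_def by blast
    have Dcl: "closedin ZT D" using u comp_def closedin_connected_component_of by simp
    have DZc: "D \<subseteq> Zc" using Dcl closedin_subset ZT_def by (fastforce simp: topspace_subtopology)
    have WD: "W D = (W' \<times> {-\<delta>..\<delta>}) \<inter> Lev"
    proof (intro subset_antisym subsetI)
      fix z assume z: "z \<in> W D"
      obtain B' b' where zz: "z = (B',b')" by (cases z)
      have zL: "(B',b') \<in> Lev" and all: "\<forall>p\<in>B'. (fst p, snd p + b') \<in> D" using z zz W_def by auto
      note L = Levp[OF zL]
      have "\<forall>p\<in>B'. (fst p, c - F (fst p)) \<in> D"
      proof
        fix p assume p: "p \<in> B'"
        obtain x' s' where p': "p = (x',s')" by (cases p)
        have "g B' = F x' + s'" using liftZc(2)[OF zL p[unfolded p']] .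
        then have "snd p + b' = c - F (fst p)" using L(3) p' by simp
        then show "(fst p, c - F (fst p)) \<in> D" using all p by metis
      qed
      moreover have "g B' \<in> {c-\<delta>..c+\<delta>}" "b' \<in> {-\<delta>..\<delta>}" using L(2,3) by (auto simp: abs_le_iff)
      ultimately show "z \<in> (W' \<times> {-\<delta>..\<delta>}) \<inter> Lev" using zz zL L(1) W'_def by simp
    next
      fix z assume z: "z \<in> (W' \<times> {-\<delta>..\<delta>}) \<inter> Lev"
      obtain B' b' where zz: "z = (B',b')" by (cases z)
      have zL: "(B',b') \<in> Lev" and w: "B' \<in> W'" using z zz by auto
      note L = Levp[OF zL]
      have "\<forall>p\<in>B'. (fst p, snd p + b') \<in> D"
      proof
        fix p assume p: "p \<in> B'"
        obtain x' s' where p': "p = (x',s')" by (cases p)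
        have "g B' = F x' + s'" using liftZc(2)[OF zL p[unfolded p']] .
        then have "snd p + b' = c - F (fst p)" using L(3) p' by simp
        moreover have "(fst p, c - F (fst p)) \<in> D" using w p W'_def by simp
        ultimately show "(fst p, snd p + b') \<in> D" by metis
      qed
      then show "z \<in> W D" using zz zL W_def by simp
    qed
    have contTF: "continuous_map Y euclideanreal (thicken_fun F)" using cont_tf[OF contF] Y_def by simp
    have S1cl: "closedin Y S1" unfolding S1_def
      by (rule closedin_continuous_map_preimage[OF contTF]) (simp add: closed_closedin[symmetric])
    have mcont: "continuous_map (subtopology Y S1) ZT m"
    proof -
      have c1: "continuous_map Y X fst" unfolding Y_def thicken_def by (rule continuous_map_fst)
      have c2: "continuous_map Y euclideanreal (\<lambda>p. c - F (fst p))"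
        by (intro continuous_map_diff continuous_map_const[THEN iffD2] continuous_map_compose[OF c1 contF, unfolded o_def]) simp
      have im: "(\<lambda>p. c - F (fst p)) ` topspace (subtopology Y S1) \<subseteq> {-(\<epsilon>+\<delta>)..\<epsilon>+\<delta>}"
        using S1_def by (auto simp: topspace_subtopology Y_def topspace_thicken abs_le_iff)
      have "continuous_map (subtopology Y S1) Z m"
        unfolding Z_def thicken_def m_def
      proof (intro continuous_map_pairedI)
        show "continuous_map (subtopology Y S1) X fst" using c1 by (rule continuous_map_from_subtopology)
        show "continuous_map (subtopology Y S1) (top_of_set {- (\<epsilon> + \<delta>)..\<epsilon> + \<delta>}) (\<lambda>x. c - F (fst x))"
          unfolding continuous_map_in_subtopology using im continuous_map_from_subtopology[OF c2] by (simp add: image_subset_iff_funcset)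
      qed
      moreover have "m ` topspace (subtopology Y S1) \<subseteq> Zc"
        using S1_def by (auto simp: topspace_subtopology Y_def topspace_thicken abs_le_iff Zc_def Z_def m_def)
      ultimately show ?thesis unfolding ZT_def by (simp add: continuous_map_in_subtopology image_subset_iff_funcset)
    qed
    have "closedin (subtopology Y S1) {p \<in> topspace (subtopology Y S1). m p \<in> D}"
      by (rule closedin_continuous_map_preimage[OF mcont Dcl])
    moreover have "{p \<in> topspace (subtopology Y S1). m p \<in> D} = SD"
      using S1_def SD_def by (auto simp: topspace_subtopology)
    ultimately have SDcl: "closedin Y SD" using closedin_trans_full S1cl by metis
    have UW: "\<Union>W' = SD"
    proof (intro subset_antisym subsetI)
      fix p assume "p \<in> \<Union>W'"
      then obtain B' where B': "B' \<in> W'" "p \<in> B'" by blast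
      obtain x' s' where p': "p = (x',s')" by (cases p)
      have Bq: "B' \<in> topspace Q" using B' W'_def by simp
      have cp: "x' \<in> topspace X" "\<bar>s'\<bar> \<le> \<epsilon>" "g B' = F x' + s'"
        using class_pt[OF Bq[unfolded Q_def] B'(2)[unfolded p']] by (simp_all add: g_def)
      then show "p \<in> SD" using B' p' W'_def SD_def m_def
        by (auto simp: Y_def topspace_thicken abs_le_iff)
    next
      fix p assume p: "p \<in> SD"
      obtain x' s' where p': "p = (x',s')" by (cases p)
      have pY: "p \<in> topspace Y" using p SD_def by simp
      define B' where "B' = reeb_class Y (thicken_fun F) p"
      have BQ: "B' \<in> topspace Q" using pY by (simp add: B'_def Q_def Y_def smooth_top)
      have pB: "p \<in> B'" using self_in_class[OF pY] B'_def by simp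
      have gB: "g B' = thicken_fun F p" unfolding B'_def g_def smooth_fun_def by (rule reeb_fun_class[OF pY])
      define k where "k = c - thicken_fun F p"
      have k: "\<bar>k\<bar> \<le> \<delta>" "thicken_fun F p + k = c" using p SD_def k_def by (auto simp: abs_le_iff)
      have "\<forall>q\<in>B'. (fst q, c - F (fst q)) \<in> D"
      proof
        fix q assume q: "q \<in> B'"
        have r: "reeb_rel Y (thicken_fun F) p q" using q B'_def in_class by metis
        have cc: "connected_component_of ZT (fst p, snd p + k) (fst q, snd q + k)" by (rule liftcc[OF r k])
        have e1: "(fst p, snd p + k) = m p" using p' k_def m_def by simp
        have "thicken_fun F q = thicken_fun F p" using rel_topspace[OF r] by simp
        then have e2: "(fst q, snd q + k) = (fst q, c - F (fst q))" using k_def by (cases q) simp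
        have "m p \<in> D" using p SD_def by simp
        then show "(fst q, c - F (fst q)) \<in> D" using compmem[OF hD _ cc[unfolded e1 e2]] by simp
      qed
      then have "B' \<in> W'" using BQ gB p SD_def W'_def by simp
      then show "p \<in> \<Union>W'" using pB by blast
    qed
    have W'sub: "W' \<subseteq> reeb_class Y (thicken_fun F) ` topspace Y"
      by (auto simp: W'_def Q_def Y_def smooth_top)
    have "closedin Q W'" unfolding Q_def smooth_def Y_def[symmetric]
      by (rule closedin_reeb_top[OF W'sub]) (simp add: UW SDcl)
    then have "closedin T (W' \<times> {-\<delta>..\<delta>})" unfolding T_def thicken_def
      by (simp add: closedin_prod_Times_iff)
    then show ?thesis unfolding WD by (auto simp: closedin_subtopology)
  qed
  have Alev: "(A,a) \<in> Lev" using Aa by (simp add: Lev_def T_def topspace_thicken c_def abs_le_iff)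
  have xsa: "(x, s+a) \<in> Zc" using liftZc(1)[OF Alev xA] .
  have gA: "g A = F x + s" using liftZc(2)[OF Alev xA] .
  define D0 where "D0 = comp (x, s+a)"
  have D0: "D0 \<in> Cs" using xsa D0_def Cs_def by blast
  have "\<forall>q\<in>A. (fst q, snd q + a) \<in> D0"
  proof
    fix q assume q: "q \<in> A"
    have r: "reeb_rel Y (thicken_fun F) (x,s) q" using class_rel[OF Aa(1)[unfolded Q_def] xA q] Y_def by simp
    have "thicken_fun F (x,s) + a = c" using gA c_def by simp
    then have "connected_component_of ZT (fst (x,s), snd (x,s) + a) (fst q, snd q + a)" by (rule liftcc[OF r Aa(2)])
    then show "(fst q, snd q + a) \<in> D0" using D0_def comp_def by simp
  qed
  then have AW: "(A,a) \<in> W D0" using Alev W_def by simp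
  have eqW: "W D0 = Lev - \<Union>(W ` (Cs - {D0}))"
  proof (intro subset_antisym subsetI)
    fix z assume z: "z \<in> W D0"
    then have "z \<in> Lev" using W_def by simp
    moreover have "z \<notin> \<Union>(W ` (Cs - {D0}))"
    proof
      assume "z \<in> \<Union>(W ` (Cs - {D0}))"
      then obtain D where "D \<in> Cs" "D \<noteq> D0" "z \<in> W D" by blast
      then show False using disj[OF D0 _ z] by blast
    qed
    ultimately show "z \<in> Lev - \<Union>(W ` (Cs - {D0}))" by simp
  next
    fix z assume z: "z \<in> Lev - \<Union>(W ` (Cs - {D0}))"
    then obtain D where "D \<in> Cs" "z \<in> W D" using cover by blast
    then show "z \<in> W D0" using z by blast
  qed
  have LevT: "Lev \<subseteq> topspace T" using Lev_def by blast
  have topL: "topspace (subtopology T Lev) = Lev" using LevT by (simp add: topspace_subtopology Int_absorb1)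
  have cl: "closedin (subtopology T Lev) (\<Union>(W ` (Cs - {D0})))"
    by (rule closedin_Union) (use finCs closedW in auto)
  have op: "openin (subtopology T Lev) (W D0)"
    using openin_diff[OF openin_topspace cl, of ] eqW topL by simp
  have clW: "closedin (subtopology T Lev) (W D0)" using closedW[OF D0] .
  define K where "K = connected_component_of_set (subtopology T Lev) (A,a)"
  have "connectedin (subtopology T Lev) K" unfolding K_def by (rule connectedin_connected_component_of)
  then have "K \<subseteq> W D0 \<or> disjnt K (W D0)" using connectedin_clopen_cases clW op by blast
  moreover have "(A,a) \<in> K" using Alev topL K_def connected_component_of_refl by fastforce
  ultimately have KW: "K \<subseteq> W D0" using AW by (auto simp: disjnt_def)
  have levA: "{z \<in> topspace T. thicken_fun g z = thicken_fun g (A,a)} = Lev" by (simp add: Lev_def c_def)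
  from relT have "connected_component_of (subtopology T {z \<in> topspace T. thicken_fun g z = thicken_fun g (A,a)}) (A,a) (B,b)"
    unfolding reeb_rel_def by (elim conjE)
  then have "(B,b) \<in> K" unfolding levA K_def by simp
  then have "(B,b) \<in> W D0" using KW by blast
  then have "(y, r+b) \<in> D0" using yB W_def by auto
  then have cc: "connected_component_of ZT (x, s+a) (y, r+b)" using D0_def comp_def by simp
  then have "(y, r+b) \<in> Zc" using connected_component_in_topspace[OF cc] ZT_def
    by (simp add: topspace_subtopology)
  then have yZ: "(y, r+b) \<in> topspace Z" "thicken_fun F (y, r+b) = c" using Zc_def by simp_all
  have xZ: "(x, s+a) \<in> topspace Z" "thicken_fun F (x, s+a) = c" using xsa Zc_def by simp_all
  have "{w \<in> topspace Z. thicken_fun F w = thicken_fun F (x, s+a)} = Zc" using xZ(2) Zc_def by simp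
  then show ?thesis unfolding reeb_rel_def Z_def[symmetric] using xZ yZ cc ZT_def by simp
qed

lemma finite_comps:
  assumes "finite P" "\<And>p. p \<in> P \<Longrightarrow> connectedin ZT p" "S \<subseteq> \<Union>P"
  shows "finite ((\<lambda>z. connected_component_of_set ZT z) ` S)"
proof -
  have "(\<lambda>z. connected_component_of_set ZT z) ` S \<subseteq> (\<lambda>p. connected_component_of_set ZT (SOME w. w \<in> p)) ` P"
  proof
    fix C assume "C \<in> (\<lambda>z. connected_component_of_set ZT z) ` S"
    then obtain z where z: "z \<in> S" "C = connected_component_of_set ZT z" by blast
    then obtain p where p: "p \<in> P" "z \<in> p" using assms(3) by blast
    define w where "w = (SOME w. w \<in> p)"
    have w: "w \<in> p" unfolding w_def using p(2) by (rule someI)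
    have "connected_component_of ZT z w" unfolding connected_component_of_def using assms(2)[OF p(1)] p(2) w by blast
    then have "connected_component_of ZT z = connected_component_of ZT w" by (meson connected_component_of_equiv)
    then show "C \<in> (\<lambda>p. connected_component_of_set ZT (SOME w. w \<in> p)) ` P" using z p(1) w_def by auto
  qed
  then show ?thesis using assms(1) finite_subset by blast
qed

lemma emb_in:
  assumes "reeb_graph R" "e \<in> edges R" "h \<in> {ht R (lo R e)..ht R (hi R e)}"
  shows "emb R e h \<in> rcarrier R" "fval R (emb R e h) = h"
proof -
  have l: "lo R e \<in> nodes R" "hi R e \<in> nodes R" using assms(1,2) unfolding reeb_graph_def by blast+
  have h: "ht R (lo R e) \<le> h" "h \<le> ht R (hi R e)" using assms(3) by simp_all
  show "emb R e h \<in> rcarrier R"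
  proof (cases "h = ht R (lo R e)")
    case True then show ?thesis using l by (simp add: emb_def rcarrier_def)
  next
    case f1: False
    show ?thesis
    proof (cases "h = ht R (hi R e)")
      case True then show ?thesis using l f1 by (simp add: emb_def rcarrier_def)
    next
      case False
      then have "Ed e h \<in> {Ed e h | e h. e \<in> edges R \<and> ht R (lo R e) < h \<and> h < ht R (hi R e)}"
        using f1 h assms(2) by auto
      then show ?thesis using f1 False by (simp add: emb_def rcarrier_def)
    qed
  qed
  show "fval R (emb R e h) = h" by (simp add: emb_def)
qed

lemma istop_reeb_space: "istopology (\<lambda>U. U \<subseteq> rcarrier R \<and>
     (\<forall>e\<in>edges R. openin (top_of_set {ht R (lo R e)..ht R (hi R e)})
        {h \<in> {ht R (lo R e)..ht R (hi R e)}. emb R e h \<in> U}))"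
proof -
  have f1: "S \<inter> T \<subseteq> rcarrier R \<and> (\<forall>e\<in>edges R. openin (top_of_set {ht R (lo R e)..ht R (hi R e)})
        {h \<in> {ht R (lo R e)..ht R (hi R e)}. emb R e h \<in> S \<inter> T})"
    if a: "S \<subseteq> rcarrier R \<and> (\<forall>e\<in>edges R. openin (top_of_set {ht R (lo R e)..ht R (hi R e)})
        {h \<in> {ht R (lo R e)..ht R (hi R e)}. emb R e h \<in> S})"
      "T \<subseteq> rcarrier R \<and> (\<forall>e\<in>edges R. openin (top_of_set {ht R (lo R e)..ht R (hi R e)})
        {h \<in> {ht R (lo R e)..ht R (hi R e)}. emb R e h \<in> T})" for S T
  proof -
    have "openin (top_of_set {ht R (lo R e)..ht R (hi R e)})
        {h \<in> {ht R (lo R e)..ht R (hi R e)}. emb R e h \<in> S \<inter> T}" if e: "e \<in> edges R" for e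
    proof -
      have "{h \<in> {ht R (lo R e)..ht R (hi R e)}. emb R e h \<in> S \<inter> T} =
         {h \<in> {ht R (lo R e)..ht R (hi R e)}. emb R e h \<in> S} \<inter> {h \<in> {ht R (lo R e)..ht R (hi R e)}. emb R e h \<in> T}"
        by auto
      then show ?thesis using a e by (simp add: openin_Int)
    qed
    then show ?thesis using a by auto
  qed
  have f2: "\<Union>K \<subseteq> rcarrier R \<and> (\<forall>e\<in>edges R. openin (top_of_set {ht R (lo R e)..ht R (hi R e)})
        {h \<in> {ht R (lo R e)..ht R (hi R e)}. emb R e h \<in> \<Union>K})"
    if a: "\<forall>S\<in>K. S \<subseteq> rcarrier R \<and> (\<forall>e\<in>edges R. openin (top_of_set {ht R (lo R e)..ht R (hi R e)})
        {h \<in> {ht R (lo R e)..ht R (hi R e)}. emb R e h \<in> S})" for K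
  proof -
    have "openin (top_of_set {ht R (lo R e)..ht R (hi R e)})
        {h \<in> {ht R (lo R e)..ht R (hi R e)}. emb R e h \<in> \<Union>K}" if e: "e \<in> edges R" for e
    proof -
      have "{h \<in> {ht R (lo R e)..ht R (hi R e)}. emb R e h \<in> \<Union>K} =
         \<Union>((\<lambda>S. {h \<in> {ht R (lo R e)..ht R (hi R e)}. emb R e h \<in> S}) ` K)"
        by auto
      moreover have "openin (top_of_set {ht R (lo R e)..ht R (hi R e)}) (\<Union>((\<lambda>S. {h \<in> {ht R (lo R e)..ht R (hi R e)}. emb R e h \<in> S}) ` K))"
        by (rule openin_Union) (use a e in auto)
      ultimately show ?thesis by simp
    qed
    then show ?thesis using a by auto
  qed
  show ?thesis unfolding istopology_def using f1 f2 by blast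
qed

lemma openin_reeb_space: "openin (reeb_space R) U \<longleftrightarrow> U \<subseteq> rcarrier R \<and>
     (\<forall>e\<in>edges R. openin (top_of_set {ht R (lo R e)..ht R (hi R e)})
        {h \<in> {ht R (lo R e)..ht R (hi R e)}. emb R e h \<in> U})"
  by (simp only: reeb_space_def topology_inverse'[OF istop_reeb_space])

lemma topspace_reeb_space:
  assumes "reeb_graph R"
  shows "topspace (reeb_space R) = rcarrier R"
proof -
  have "openin (reeb_space R) (rcarrier R)"
    unfolding openin_reeb_space
  proof (intro conjI ballI subset_refl)
    fix e assume e: "e \<in> edges R"
    have "{h \<in> {ht R (lo R e)..ht R (hi R e)}. emb R e h \<in> rcarrier R} = topspace (top_of_set {ht R (lo R e)..ht R (hi R e)})"
      using emb_in(1)[OF assms e] by auto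
    then show "openin (top_of_set {ht R (lo R e)..ht R (hi R e)}) {h \<in> {ht R (lo R e)..ht R (hi R e)}. emb R e h \<in> rcarrier R}"
      by (simp only: openin_topspace)
  qed
  moreover have "S \<subseteq> rcarrier R" if "openin (reeb_space R) S" for S
    using that by (simp add: openin_reeb_space)
  ultimately show ?thesis unfolding topspace_def
    by (intro subset_antisym Union_least Union_upper) auto
qed

lemma cont_fval:
  assumes "reeb_graph R"
  shows "continuous_map (reeb_space R) euclideanreal (fval R)"
  unfolding continuous_map_def
proof (intro conjI allI impI)
  show "fval R \<in> topspace (reeb_space R) \<rightarrow> topspace euclideanreal" by simp
  fix U :: "real set" assume U: "openin euclideanreal U"
  show "openin (reeb_space R) {x \<in> topspace (reeb_space R). fval R x \<in> U}"
    unfolding openin_reeb_space topspace_reeb_space[OF assms]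
  proof (intro conjI ballI)
    show "{x \<in> rcarrier R. fval R x \<in> U} \<subseteq> rcarrier R" by blast
    fix e assume e: "e \<in> edges R"
    have "{h \<in> {ht R (lo R e)..ht R (hi R e)}. emb R e h \<in> {x \<in> rcarrier R. fval R x \<in> U}} = {ht R (lo R e)..ht R (hi R e)} \<inter> U"
    proof (intro subset_antisym subsetI)
      fix h assume "h \<in> {h \<in> {ht R (lo R e)..ht R (hi R e)}. emb R e h \<in> {x \<in> rcarrier R. fval R x \<in> U}}"
      then show "h \<in> {ht R (lo R e)..ht R (hi R e)} \<inter> U" using emb_in(2)[OF assms e, of h] by simp
    next
      fix h assume h: "h \<in> {ht R (lo R e)..ht R (hi R e)} \<inter> U"
      then show "h \<in> {h \<in> {ht R (lo R e)..ht R (hi R e)}. emb R e h \<in> {x \<in> rcarrier R. fval R x \<in> U}}"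
        using emb_in[OF assms e, of h] by simp
    qed
    moreover have "open U" by (metis U open_openin)
    ultimately show "openin (top_of_set {ht R (lo R e)..ht R (hi R e)}) {h \<in> {ht R (lo R e)..ht R (hi R e)}. emb R e h \<in> {x \<in> rcarrier R. fval R x \<in> U}}"
      by (simp add: openin_open_Int)
  qed
qed

lemma cont_emb:
  assumes "reeb_graph R" "e \<in> edges R"
  shows "continuous_map (top_of_set {ht R (lo R e)..ht R (hi R e)}) (reeb_space R) (emb R e)"
  unfolding continuous_map_def
proof (intro conjI allI impI)
  show "emb R e \<in> topspace (top_of_set {ht R (lo R e)..ht R (hi R e)}) \<rightarrow> topspace (reeb_space R)"
    using emb_in(1)[OF assms] by (auto simp: topspace_reeb_space[OF assms(1)])
  fix U assume "openin (reeb_space R) U"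
  then show "openin (top_of_set {ht R (lo R e)..ht R (hi R e)}) {x \<in> topspace (top_of_set {ht R (lo R e)..ht R (hi R e)}). emb R e x \<in> U}"
    using assms(2) by (simp add: openin_reeb_space)
qed


lemma fin_reeb:
  assumes R: "reeb_graph R"
  shows "finite ((\<lambda>z. connected_component_of_set (subtopology (thicken (reeb_space R) \<eta>) {w \<in> topspace (thicken (reeb_space R) \<eta>). thicken_fun (fval R) w = c}) z) ` {w \<in> topspace (thicken (reeb_space R) \<eta>). thicken_fun (fval R) w = c})"
proof -
  define X where "X = reeb_space R"
  define Z where "Z = thicken X \<eta>"
  define Zc where "Zc = {w \<in> topspace Z. thicken_fun (fval R) w = c}"
  define ZT where "ZT = subtopology Z Zc"
  define NP where "NP = (\<lambda>v. {(Nd v, c - ht R v)} \<inter> Zc)"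
  define K where "K = (\<lambda>e. {ht R (lo R e)..ht R (hi R e)} \<inter> {c-\<eta>..c+\<eta>})"
  define EP where "EP = (\<lambda>e. (\<lambda>h. (emb R e h, c - h)) ` K e)"
  define P where "P = NP ` nodes R \<union> EP ` edges R"
  have topZ: "topspace Z = rcarrier R \<times> {-\<eta>..\<eta>}"
    by (simp add: Z_def X_def topspace_thicken topspace_reeb_space[OF R])
  have topZT: "topspace ZT = Zc" unfolding ZT_def Zc_def by (auto simp: topspace_subtopology)
  have finP: "finite P" using R unfolding P_def reeb_graph_def by simp
  have conn: "connectedin ZT p" if p: "p \<in> P" for p
  proof -
    { fix v assume "p = NP v"
      then have ?thesis
      proof (cases "(Nd v, c - ht R v) \<in> Zc")
        case True
        then have "p = {(Nd v, c - ht R v)}" using \<open>p = NP v\<close> NP_def by auto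
        then show ?thesis using True topZT by simp
      next
        case False
        then have "p = {}" using \<open>p = NP v\<close> NP_def by auto
        then show ?thesis by simp
      qed }
    moreover
    { fix e assume pe: "p = EP e" and e: "e \<in> edges R"
      have KI: "{ht R (lo R e)..ht R (hi R e)} \<inter> K e = K e" using K_def by auto
      have ce: "continuous_map (top_of_set (K e)) X (emb R e)"
        using continuous_map_from_subtopology[OF cont_emb[OF R e], of "K e"]
        by (simp add: subtopology_subtopology KI X_def)
      have c2: "continuous_map (top_of_set (K e)) euclideanreal (\<lambda>h. c - h)"
        by (intro continuous_map_diff continuous_map_id_subt[unfolded id_def]) simp
      have im2: "(\<lambda>h. c - h) ` topspace (top_of_set (K e)) \<subseteq> {-\<eta>..\<eta>}"
        using K_def by auto
      have "continuous_map (top_of_set (K e)) Z (\<lambda>h. (emb R e h, c - h))"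
        unfolding Z_def thicken_def
      proof (intro continuous_map_pairedI)
        show "continuous_map (top_of_set (K e)) X (emb R e)" by (rule ce)
        show "continuous_map (top_of_set (K e)) (top_of_set {- \<eta>..\<eta>}) (\<lambda>h. c - h)"
          unfolding continuous_map_in_subtopology using c2 im2 by (simp add: image_subset_iff_funcset)
      qed
      moreover have "(\<lambda>h. (emb R e h, c - h)) ` topspace (top_of_set (K e)) \<subseteq> Zc"
      proof
        fix w assume "w \<in> (\<lambda>h. (emb R e h, c - h)) ` topspace (top_of_set (K e))"
        then obtain h where h: "h \<in> K e" "w = (emb R e h, c - h)" by auto
        have hI: "h \<in> {ht R (lo R e)..ht R (hi R e)}" using h(1) K_def by auto
        have "\<bar>c - h\<bar> \<le> \<eta>" using h(1) K_def by (auto simp: abs_le_iff)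
        then show "w \<in> Zc" using emb_in[OF R e hI] h(2) topZ Zc_def by (auto simp: abs_le_iff)
      qed
      ultimately have cm: "continuous_map (top_of_set (K e)) ZT (\<lambda>h. (emb R e h, c - h))"
        unfolding ZT_def by (simp add: continuous_map_in_subtopology image_subset_iff_funcset)
      have "K e = {max (ht R (lo R e)) (c-\<eta>)..min (ht R (hi R e)) (c+\<eta>)}" using K_def by auto
      then have "connected (K e)" by simp
      then have "connectedin (top_of_set (K e)) (K e)" by (simp add: connectedin_subtopology)
      from connectedin_continuous_map_image[OF cm this]
      have ?thesis using pe EP_def by simp }
    ultimately show ?thesis using p P_def by blast
  qed
  have cover: "Zc \<subseteq> \<Union>P"
  proof
    fix w assume w: "w \<in> Zc"
    obtain xx u where wu: "w = (xx,u)" by (cases w)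
    have xx: "xx \<in> rcarrier R" "\<bar>u\<bar> \<le> \<eta>" "fval R xx + u = c"
      using w wu topZ Zc_def by (auto simp: abs_le_iff)
    show "w \<in> \<Union>P"
    proof (cases xx)
      case (Nd v)
      then have "v \<in> nodes R" using xx(1) by (auto simp: rcarrier_def)
      moreover have "w \<in> NP v" using Nd xx(3) w wu NP_def by auto
      ultimately show ?thesis using P_def by blast
    next
      case (Ed e h)
      then have eh: "e \<in> edges R" "ht R (lo R e) < h" "h < ht R (hi R e)" using xx(1) by (auto simp: rcarrier_def)
      have u: "u = c - h" using xx(3) Ed by simp
      have "h \<in> K e" using eh xx(2) u K_def by (auto simp: abs_le_iff)
      moreover have "emb R e h = Ed e h" using eh by (simp add: emb_def)
      moreover have "(emb R e h, c - h) \<in> EP e" using \<open>h \<in> K e\<close> unfolding EP_def by (rule imageI)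
      ultimately have "w \<in> EP e" using wu Ed u by simp
      then show ?thesis using eh(1) P_def by blast
    qed
  qed
  have "finite ((\<lambda>z. connected_component_of_set ZT z) ` Zc)"
    by (rule finite_comps[OF finP conn cover])
  then show ?thesis by (simp add: ZT_def Zc_def Z_def X_def)
qed

theorem lemma5:
  fixes R1 :: "('v1,'e1) reeb" and R2 :: "('v2,'e2) reeb"
    and \<epsilon> \<delta> :: real and v1 :: 'v1 and v2 :: 'v2
    and \<phi> :: "('v1,'e1) rpt \<Rightarrow> (('v2,'e2) rpt \<times> real) set"
  assumes "reeb_graph R1" and "reeb_graph R2"
    and "\<epsilon> \<ge> 0"
    and "v1 \<in> nodes R1" and "v2 \<in> nodes R2"
    and "(max_or_split R1 v1 \<and> max_or_split R2 v2) \<or> (min_or_join R1 v1 \<and> min_or_join R2 v2)"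
    and "morphism (reeb_space R1) (fval R1) (smooth (reeb_space R2) (fval R2) \<epsilon>) (smooth_fun (fval R2)) \<phi>"
    and "\<phi> (Nd v1) \<in> Pset (reeb_space R2) (fval R2) \<epsilon> (Nd v2)"
    and "\<delta> \<ge> 0"
  shows "smooth_morph (reeb_space R1) (fval R1) (reeb_space R2) (fval R2) \<epsilon> \<delta> \<phi> (sdelta R1 \<delta> v1)
         \<in> ident (reeb_space R2) (fval R2) \<delta> \<epsilon>
             ` Pset (smooth (reeb_space R2) (fval R2) \<delta>) (smooth_fun (fval R2)) \<epsilon> (sdelta R2 \<delta> v2)"
proof -
  note R1 = assms(1) and R2 = assms(2)
  have mor: "continuous_map (reeb_space R1) (smooth (reeb_space R2) (fval R2) \<epsilon>) \<phi>"
    "\<And>x. x \<in> topspace (reeb_space R1) \<Longrightarrow> smooth_fun (fval R2) (\<phi> x) = fval R1 x"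
    using assms(7) unfolding morphism_def by auto
  define \<tau> where "\<tau> = (if max_or_split R1 v1 then \<delta> else -\<delta>)"
  have tau: "\<bar>\<tau>\<bar> \<le> \<delta>" using assms(9) \<tau>_def by simp
  have same: "max_or_split R2 v2 \<longleftrightarrow> max_or_split R1 v1"
    using assms(6) unfolding max_or_split_def min_or_join_def by auto
  have s1: "sdelta R1 \<delta> v1 = reeb_class (thicken (reeb_space R1) \<delta>) (thicken_fun (fval R1)) (Nd v1, \<tau>)"
    by (simp add: sdelta_def proj_def \<tau>_def)
  have s2: "sdelta R2 \<delta> v2 = reeb_class (thicken (reeb_space R2) \<delta>) (thicken_fun (fval R2)) (Nd v2, \<tau>)"
    using same by (simp add: sdelta_def proj_def \<tau>_def)
  have v1t: "(Nd v1, \<tau>) \<in> topspace (thicken (reeb_space R1) \<delta>)"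
    using assms(4) tau by (simp add: topspace_thicken topspace_reeb_space[OF R1] rcarrier_def abs_le_iff)
  have v2t: "(Nd v2, \<tau>) \<in> topspace (thicken (reeb_space R2) \<delta>)"
    using assms(5) tau by (simp add: topspace_thicken topspace_reeb_space[OF R2] rcarrier_def abs_le_iff)
  obtain t0 where t0: "t0 \<in> {-\<epsilon>..\<epsilon>}" "\<phi> (Nd v1) = reeb_class (thicken (reeb_space R2) \<epsilon>) (thicken_fun (fval R2)) (Nd v2, t0)"
    using assms(8) by (auto simp: Pset_def proj_def)
  have v2t0: "(Nd v2, t0) \<in> topspace (thicken (reeb_space R2) \<epsilon>)"
    using assms(5) t0(1) by (simp add: topspace_thicken topspace_reeb_space[OF R2] rcarrier_def)
  have v2A: "(Nd v2, t0) \<in> \<phi> (Nd v1)" using self_in_class[OF v2t0] t0(2) by simp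
  define z where "z = (SOME z. z \<in> sdelta R1 \<delta> v1)"
  have zin: "z \<in> sdelta R1 \<delta> v1" unfolding z_def s1 using self_in_class[OF v1t, where F="thicken_fun (fval R1)"] by (rule someI)
  then have rz: "reeb_rel (thicken (reeb_space R1) \<delta>) (thicken_fun (fval R1)) (Nd v1, \<tau>) z"
    unfolding s1 in_class .
  define H where "H = (\<lambda>p::('v1,'e1) rpt \<times> real. (\<phi> (fst p), snd p))"
  have Hc: "continuous_map (thicken (reeb_space R1) \<delta>) (thicken (smooth (reeb_space R2) (fval R2) \<epsilon>) \<delta>) H"
    unfolding thicken_def H_def
    by (intro continuous_map_pairedI continuous_map_snd continuous_map_compose[OF continuous_map_fst mor(1), unfolded o_def])
  have Hl: "thicken_fun (smooth_fun (fval R2)) (H p) = thicken_fun (fval R1) p + 0"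
    if "p \<in> topspace (thicken (reeb_space R1) \<delta>)" for p
    using that mor(2) by (cases p) (auto simp: H_def topspace_thicken)
  have rH: "reeb_rel (thicken (smooth (reeb_space R2) (fval R2) \<epsilon>) \<delta>) (thicken_fun (smooth_fun (fval R2))) (\<phi> (Nd v1), \<tau>) (H z)"
    using rel_map[OF Hc Hl rz] by (simp add: H_def)
  define Phi where "Phi = proj (smooth (reeb_space R2) (fval R2) \<epsilon>) (smooth_fun (fval R2)) \<delta> (\<phi> (fst z)) (snd z)"
  have LHS1: "smooth_morph (reeb_space R1) (fval R1) (reeb_space R2) (fval R2) \<epsilon> \<delta> \<phi> (sdelta R1 \<delta> v1)
      = ident (reeb_space R2) (fval R2) \<epsilon> \<delta> Phi"
    unfolding smooth_morph_def Phi_def z_def Let_def ..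
  have PhiH: "Phi = reeb_class (thicken (smooth (reeb_space R2) (fval R2) \<epsilon>) \<delta>) (thicken_fun (smooth_fun (fval R2))) (H z)"
    by (simp add: Phi_def proj_def H_def)
  define z' where "z' = (SOME z'. z' \<in> Phi)"
  have Hzt: "H z \<in> topspace (thicken (smooth (reeb_space R2) (fval R2) \<epsilon>) \<delta>)" using rel_topspace[OF rH] by simp
  have z'in: "z' \<in> Phi" unfolding z'_def PhiH using self_in_class[OF Hzt, where F="thicken_fun (smooth_fun (fval R2))"] by (rule someI)
  then have "reeb_rel (thicken (smooth (reeb_space R2) (fval R2) \<epsilon>) \<delta>) (thicken_fun (smooth_fun (fval R2))) (H z) z'"
    unfolding PhiH in_class .
  from rel_trans[OF rH this]
  have rz': "reeb_rel (thicken (smooth (reeb_space R2) (fval R2) \<epsilon>) \<delta>) (thicken_fun (smooth_fun (fval R2))) (\<phi> (Nd v1), \<tau>) (fst z', snd z')"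
    by simp
  have fz': "fst z' \<in> topspace (smooth (reeb_space R2) (fval R2) \<epsilon>)"
    using rel_topspace[OF rz'] unfolding topspace_thicken by (simp add: mem_Times_iff)
  define p where "p = (SOME p. p \<in> fst z')"
  obtain q where "q \<in> fst z'" using class_nonempty[OF fz'] by blast
  then have pin: "p \<in> fst z'" unfolding p_def by (rule someI)
  have L1: "reeb_rel (thicken (reeb_space R2) (\<epsilon>+\<delta>)) (thicken_fun (fval R2)) (Nd v2, t0 + \<tau>) (fst p, snd p + snd z')"
  proof -
    have pp: "(fst p, snd p) \<in> fst z'" using pin by simp
    show ?thesis
      by (rule lift[where X="reeb_space R2" and F="fval R2" and \<epsilon>=\<epsilon> and \<delta>=\<delta>, OF cont_fval[OF R2] fin_reeb[OF R2, where \<eta>="\<epsilon>+\<delta>"] rz' v2A pp])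
  qed
  have LHS: "smooth_morph (reeb_space R1) (fval R1) (reeb_space R2) (fval R2) \<epsilon> \<delta> \<phi> (sdelta R1 \<delta> v1)
      = reeb_class (thicken (reeb_space R2) (\<epsilon>+\<delta>)) (thicken_fun (fval R2)) (Nd v2, t0 + \<tau>)"
    unfolding LHS1 ident_def Let_def z'_def[symmetric] p_def[symmetric] proj_def
    using class_eq[OF L1] by simp
  define S where "S = sdelta R2 \<delta> v2"
  define Psi where "Psi = proj (smooth (reeb_space R2) (fval R2) \<delta>) (smooth_fun (fval R2)) \<epsilon> S t0"
  have PsiP: "Psi \<in> Pset (smooth (reeb_space R2) (fval R2) \<delta>) (smooth_fun (fval R2)) \<epsilon> (sdelta R2 \<delta> v2)"
    unfolding Pset_def Psi_def S_def using t0(1) by blast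
  have St: "S \<in> topspace (smooth (reeb_space R2) (fval R2) \<delta>)"
    using v2t s2 S_def by (simp add: smooth_top)
  have St0: "(S, t0) \<in> topspace (thicken (smooth (reeb_space R2) (fval R2) \<delta>) \<epsilon>)"
    using St t0(1) by (simp add: topspace_thicken)
  define z'' where "z'' = (SOME z. z \<in> Psi)"
  have z''in: "z'' \<in> Psi" unfolding z''_def Psi_def proj_def using self_in_class[OF St0, where F="thicken_fun (smooth_fun (fval R2))"] by (rule someI)
  then have rz'': "reeb_rel (thicken (smooth (reeb_space R2) (fval R2) \<delta>) \<epsilon>) (thicken_fun (smooth_fun (fval R2))) (S, t0) (fst z'', snd z'')"
    unfolding Psi_def proj_def by (simp add: in_class)
  have fz'': "fst z'' \<in> topspace (smooth (reeb_space R2) (fval R2) \<delta>)"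
    using rel_topspace[OF rz''] unfolding topspace_thicken by (simp add: mem_Times_iff)
  define p'' where "p'' = (SOME p. p \<in> fst z'')"
  obtain q'' where "q'' \<in> fst z''" using class_nonempty[OF fz''] by blast
  then have p''in: "p'' \<in> fst z''" unfolding p''_def by (rule someI)
  have v2S: "(Nd v2, \<tau>) \<in> S" using self_in_class[OF v2t] s2 S_def by simp
  have L2: "reeb_rel (thicken (reeb_space R2) (\<delta>+\<epsilon>)) (thicken_fun (fval R2)) (Nd v2, \<tau> + t0) (fst p'', snd p'' + snd z'')"
  proof -
    have pp: "(fst p'', snd p'') \<in> fst z''" using p''in by simp
    show ?thesis
      by (rule lift[where X="reeb_space R2" and F="fval R2" and \<epsilon>=\<delta> and \<delta>=\<epsilon>, OF cont_fval[OF R2] fin_reeb[OF R2, where \<eta>="\<delta>+\<epsilon>"] rz'' v2S pp])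
  qed
  have RHS: "ident (reeb_space R2) (fval R2) \<delta> \<epsilon> Psi
      = reeb_class (thicken (reeb_space R2) (\<delta>+\<epsilon>)) (thicken_fun (fval R2)) (Nd v2, \<tau> + t0)"
    unfolding ident_def Let_def z''_def[symmetric] p''_def[symmetric] proj_def
    using class_eq[OF L2] by simp
  have "smooth_morph (reeb_space R1) (fval R1) (reeb_space R2) (fval R2) \<epsilon> \<delta> \<phi> (sdelta R1 \<delta> v1)
      = ident (reeb_space R2) (fval R2) \<delta> \<epsilon> Psi"
    unfolding LHS RHS by (simp add: add.commute)
  then show ?thesis using PsiP by (rule rev_image_eqI[rotated])
qed

end
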